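(* Let $K$ be an infinite field of characteristic $p>0$, let $\lambda=(\lambda_1,\dots,\lambda_n)$ and $\mu=(\mu_1,\dots,\mu_n)$ be partitions of $r$ with $\mu_2\le\lambda_1$, let $k,d$ be positive integers, and let $\mu^+=(\mu_1+kp^d,\mu_2,\dots,\mu_n)$. Let $U\in A$ and write $[U]=\sum_{T\in\mathrm{Std}(\mu)}c_T[T]$ in $\Delta(\mu)$ with $c_T\in K$. Then $[U^+]=\sum_{T\in\mathrm{Std}(\mu)}c_T[T^+]$ in $\Delta(\mu^+)$; i.e. writing $[U^+]=\sum_{T\in\mathrm{Std}(\mu)}c_{T^+}[T^+]$, one has $c_T=c_{T^+}$ for all $T\in\mathrm{Std}(\mu)$.
   Context: $V=K^n$ with basis $e_1<\dots<e_n$, written $1,\dots,n$; $D(\nu)=D_{\nu_1}V\otimes\cdots\otimes D_{\nu_n}V$ (divided powers), $i^{(a)}$ the $a$-th divided power of $e_i$. $\Delta(\nu)$ is the Weyl module of the Schur algebra $S_K(n,|\nu|)$, with the Akin–Buchsbaum–Weyman surjection $d'_\nu:D(\nu)\to\Delta(\nu)$. A tableau of shape $\nu$ is a filling of the Young diagram of $\nu$ by entries in $\{1,\dots,n\}$; it is standard if rows weakly increase and columns strictly increase; $\mathrm{Std}(\nu)$ is the set of standard tableaux of shape $\nu$. For a tableau $T$, $x_T=x_T(1)\otimes\cdots\otimes x_T(n)\in D(\nu)$ where $x_T(i)=1^{(a_{i1})}\cdots n^{(a_{in})}$ with $a_{ij}$ the number of $j$'s in row $i$, and $[T]=d'_\nu(x_T)$;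 the $[T]$, $T\in\mathrm{Std}(\nu)$, form a basis of $\Delta(\nu)$. For a tableau $T$ of shape $\mu$, $T^+$ is the tableau of shape $\mu^+$ obtained by inserting $kp^d$ entries $1$ at the start of the top row. $A$ is the set of tableaux of shape $\mu$ whose row $i$ (for each $i$) contains only entries $\ge i$ and whose first row contains exactly $\lambda_1+t$ entries equal to $1$ for some $0\le t\le\lambda_2$ (rows written as $i^{(a_{ii})}(i+1)^{(a_{i,i+1})}\cdots n^{(a_{in})}$, the first row as $1^{(\lambda_1+t)}2^{(a_{12})}\cdots n^{(a_{1n})}$). *)

theory Defs
  imports Main "HOL-Library.Multiset"
begin

(* Shapes nu : nat => nat (row i has nu i boxes, rows 1..n);
   tableaux T : nat => nat => nat, T i j = entry in row i, column j (1-indexed),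
   entries in {1..n} inside the diagram and 0 outside. *)

definition is_partition :: "nat \<Rightarrow> nat \<Rightarrow> (nat \<Rightarrow> nat) \<Rightarrow> bool" where
  "is_partition n r lam \<longleftrightarrow> lam 0 = 0 \<and> (\<forall>i>n. lam i = 0) \<and>
     (\<forall>i. 1 \<le> i \<longrightarrow> lam (Suc i) \<le> lam i) \<and> (\<Sum>i=1..n. lam i) = r"

definition in_diag :: "nat \<Rightarrow> (nat \<Rightarrow> nat) \<Rightarrow> nat \<Rightarrow> nat \<Rightarrow> bool" where
  "in_diag n nu i j \<longleftrightarrow> 1 \<le> i \<and> i \<le> n \<and> 1 \<le> j \<and> j \<le> nu i"

definition tableau :: "nat \<Rightarrow> (nat \<Rightarrow> nat) \<Rightarrow> (nat \<Rightarrow> nat \<Rightarrow> nat) \<Rightarrow> bool" where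
  "tableau n nu T \<longleftrightarrow> (\<forall>i j. if in_diag n nu i j then T i j \<in> {1..n} else T i j = 0)"

definition col_strict :: "nat \<Rightarrow> (nat \<Rightarrow> nat) \<Rightarrow> (nat \<Rightarrow> nat \<Rightarrow> nat) \<Rightarrow> bool" where
  "col_strict n nu T \<longleftrightarrow> (\<forall>i i' j. in_diag n nu i j \<and> in_diag n nu i' j \<and> i < i' \<longrightarrow> T i j < T i' j)"

definition row_weak :: "nat \<Rightarrow> (nat \<Rightarrow> nat) \<Rightarrow> (nat \<Rightarrow> nat \<Rightarrow> nat) \<Rightarrow> bool" where
  "row_weak n nu T \<longleftrightarrow> (\<forall>i j j'. in_diag n nu i j \<and> in_diag n nu i j' \<and> j \<le> j' \<longrightarrow> T i j \<le> T i j')"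

definition Std :: "nat \<Rightarrow> (nat \<Rightarrow> nat) \<Rightarrow> (nat \<Rightarrow> nat \<Rightarrow> nat) set" where
  "Std n nu = {T. tableau n nu T \<and> row_weak n nu T \<and> col_strict n nu T}"

text \<open>Content of row i (the divided power monomial x_T(i), recorded as a multiset).\<close>
definition row_mset :: "(nat \<Rightarrow> nat) \<Rightarrow> (nat \<Rightarrow> nat \<Rightarrow> nat) \<Rightarrow> nat \<Rightarrow> nat multiset" where
  "row_mset nu T i = mset (map (T i) [1..<Suc (nu i)])"

definition col_distinct :: "nat \<Rightarrow> (nat \<Rightarrow> nat) \<Rightarrow> (nat \<Rightarrow> nat \<Rightarrow> nat) \<Rightarrow> bool" where
  "col_distinct n nu W \<longleftrightarrow> (\<forall>i i' j. in_diag n nu i j \<and> in_diag n nu i' j \<and> i \<noteq> i' \<longrightarrow> W i j \<noteq> W i' j)"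

definition col_set :: "nat \<Rightarrow> (nat \<Rightarrow> nat) \<Rightarrow> (nat \<Rightarrow> nat \<Rightarrow> nat) \<Rightarrow> nat \<Rightarrow> nat set" where
  "col_set n nu W j = {W i j | i. in_diag n nu i j}"

definition col_inv :: "nat \<Rightarrow> (nat \<Rightarrow> nat) \<Rightarrow> (nat \<Rightarrow> nat \<Rightarrow> nat) \<Rightarrow> nat" where
  "col_inv n nu W = card {(i, i', j). in_diag n nu i j \<and> in_diag n nu i' j \<and> i < i' \<and> W i' j < W i j}"

text \<open>[T] = d'_nu(x_T), the Akin-Buchsbaum-Weyman map: diagonalize each divided power
  x_T(i) into the sum of all distinct words with that content (placed in row i), then
  multiply the columns in the exterior powers.  The result lives in
  Lambda^{nu'_1} V (x) ... (x) Lambda^{nu'_m} V, whose standard basis is indexed by the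
  column-strict fillings F of the diagram; an element is recorded as its coordinate
  function F |-> coefficient (0 off column-strict fillings).\<close>
definition weyl_vec :: "nat \<Rightarrow> (nat \<Rightarrow> nat) \<Rightarrow> (nat \<Rightarrow> nat \<Rightarrow> nat) \<Rightarrow> (nat \<Rightarrow> nat \<Rightarrow> nat) \<Rightarrow> 'a::comm_ring_1" where
  "weyl_vec n nu T = (\<lambda>F. if tableau n nu F \<and> col_strict n nu F then
      (\<Sum>W\<in>{W. tableau n nu W \<and> (\<forall>i\<in>{1..n}. row_mset nu W i = row_mset nu T i)
               \<and> col_distinct n nu W \<and> (\<forall>j. col_set n nu W j = col_set n nu F j)}.
         (- 1) ^ col_inv n nu W)
     else 0)"

definition shape_plus :: "nat \<Rightarrow> (nat \<Rightarrow> nat) \<Rightarrow> (nat \<Rightarrow> nat)" where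
  "shape_plus m nu = nu(1 := nu 1 + m)"

definition tplus :: "nat \<Rightarrow> (nat \<Rightarrow> nat \<Rightarrow> nat) \<Rightarrow> (nat \<Rightarrow> nat \<Rightarrow> nat)" where
  "tplus m T = (\<lambda>i j. if i = 1 then (if 1 \<le> j \<and> j \<le> m then 1 else T 1 (j - m)) else T i j)"

definition setA :: "nat \<Rightarrow> (nat \<Rightarrow> nat) \<Rightarrow> (nat \<Rightarrow> nat) \<Rightarrow> (nat \<Rightarrow> nat \<Rightarrow> nat) set" where
  "setA n lam mu = {U. tableau n mu U \<and> (\<forall>i j. in_diag n mu i j \<longrightarrow> i \<le> U i j) \<and>
     (\<exists>t \<le> lam 2. card {j. in_diag n mu 1 j \<and> U 1 j = 1} = lam 1 + t)}"

end

theory Submission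
  imports Defs "HOL-Library.List_Lexorder"
begin


lemma part_mono:
  assumes "is_partition n r mu" "1 \<le> i" "i \<le> j" shows "mu j \<le> mu i"
  using assms(3)
proof (induction j rule: dec_induct)
  case base then show ?case by simp
next
  case (step j)
  have "mu (Suc j) \<le> mu j" using assms(1) assms(2) step(1) unfolding is_partition_def by auto
  then show ?case using step by simp
qed

lemma tab_val: "tableau n nu T \<Longrightarrow> in_diag n nu i j \<Longrightarrow> T i j \<in> {1..n}"
  unfolding tableau_def by metis
lemma tab_out: "tableau n nu T \<Longrightarrow> \<not> in_diag n nu i j \<Longrightarrow> T i j = 0"
  unfolding tableau_def by metis

lemma Std_finite: "finite (Std n nu)"
proof -
  define M where "M = Max (nu ` {1..n})"
  define D where "D = {1..n} \<times> {0..M}"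
  define G where "G = {f::nat\<times>nat\<Rightarrow>nat. \<forall>x. (x \<in> D \<longrightarrow> f x \<in> {0..n}) \<and> (x \<notin> D \<longrightarrow> f x = 0)}"
  have fG: "finite G" unfolding G_def D_def by (rule finite_set_of_finite_funs) auto
  have "Std n nu \<subseteq> curry ` G"
  proof
    fix T assume T: "T \<in> Std n nu"
    then have tT: "tableau n nu T" unfolding Std_def by simp
    have "case_prod T \<in> G"
      unfolding G_def mem_Collect_eq
    proof (intro allI conjI impI)
      fix x :: "nat\<times>nat"
      obtain i j where x: "x = (i,j)" by (cases x)
      show "case_prod T x \<in> {0..n}"
      proof (cases "in_diag n nu i j")
        case True then show ?thesis using tab_val[OF tT True] x by auto
      next
        case False then show ?thesis using tab_out[OF tT False] x by auto
      qed
    next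
      fix x :: "nat\<times>nat" assume "x \<notin> D"
      obtain i j where x: "x = (i,j)" by (cases x)
      have "\<not> in_diag n nu i j"
      proof
        assume d: "in_diag n nu i j"
        then have "nu i \<le> M" unfolding M_def in_diag_def by (intro Max_ge) auto
        then show False using d \<open>x \<notin> D\<close> x unfolding D_def in_diag_def by auto
      qed
      then show "case_prod T x = 0" using tab_out[OF tT] x by simp
    qed
    moreover have "T = curry (case_prod T)" by simp
    ultimately show "T \<in> curry ` G" by blast
  qed
  then show ?thesis using fG finite_subset by blast
qed



lemma count_map_upt: "count (mset (map f [1..<Suc x])) v = card {j \<in> {1..x}. f j = v}"
proof (induction x)
  case 0 then show ?case by simp
next
  case (Suc x)
  have e: "{j \<in> {1..Suc x}. f j = v} = {j \<in> {1..x}. f j = v} \<union> (if f (Suc x) = v then {Suc x} else {})"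
    by (auto simp: le_Suc_eq)
  have l: "[1..<Suc (Suc x)] = [1..<Suc x] @ [Suc x]" by simp
  have "count (mset (map f [1..<Suc (Suc x)])) v = count (mset (map f [1..<Suc x])) v + (if f (Suc x) = v then 1 else 0)"
    unfolding l by simp
  also have "\<dots> = card {j \<in> {1..Suc x}. f j = v}" unfolding e using Suc
    by (simp add: card_insert_if del: upt_Suc)
  finally show ?case .
qed

lemma rowsum: "sum_mset (row_mset nu X i) = (\<Sum>j=1..nu i. X i j)"
proof -
  have "sum_mset (row_mset nu X i) = sum_list (map (X i) [1..<Suc (nu i)])"
    unfolding row_mset_def by (metis sum_mset_sum_list)
  also have "\<dots> = sum (X i) (set [1..<Suc (nu i)])" by (rule sum_set_upt_conv_sum_list_nat[symmetric])
  also have "set [1..<Suc (nu i)] = {1..nu i}" by auto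
  finally show ?thesis .
qed

lemma row_split:
  assumes "a \<le> nu i"
  shows "row_mset nu W i = mset (map (W i) [1..<Suc a]) + mset (map (W i) [Suc a..<Suc (nu i)])"
proof -
  have "[1..<Suc (nu i)] = [1..<Suc a] @ [Suc a..<Suc (nu i)]"
    using upt_add_eq_append[of 1 "Suc a" "nu i - a"] assms by (simp del: upt_Suc)
  then show ?thesis unfolding row_mset_def by (simp del: upt_Suc)
qed

lemma rowplus1:
  "row_mset (shape_plus m nu) (tplus m X) 1 = replicate_mset m 1 + row_mset nu X 1"
proof -
  have s: "shape_plus m nu 1 = m + nu 1" unfolding shape_plus_def by simp
  have "[1..<Suc (m + nu 1)] = [1..<Suc m] @ [Suc m..<Suc m + nu 1]"
    using upt_add_eq_append[of 1 "Suc m" "nu 1"] by (simp del: upt_Suc)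
  moreover have "map (tplus m X 1) [1..<Suc m] = replicate m 1"
    by (rule map_upt_eqI) (auto simp: tplus_def)
  moreover have "map (tplus m X 1) [Suc m..<Suc m + nu 1] = map (X 1) [1..<Suc (nu 1)]"
    by (rule map_upt_eqI) (auto simp: tplus_def nth_upt simp del: upt_Suc)
  ultimately show ?thesis unfolding row_mset_def s by (simp del: upt_Suc)
qed

lemma rowplus_other:
  "i \<noteq> 1 \<Longrightarrow> row_mset (shape_plus m nu) (tplus m X) i = row_mset nu X i"
  unfolding row_mset_def shape_plus_def tplus_def by simp



definition WS :: "nat \<Rightarrow> (nat \<Rightarrow> nat) \<Rightarrow> (nat \<Rightarrow> nat \<Rightarrow> nat) \<Rightarrow> (nat \<Rightarrow> nat \<Rightarrow> nat) \<Rightarrow> (nat \<Rightarrow> nat \<Rightarrow> nat) set" where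
  "WS n nu T F = {W. tableau n nu W \<and> (\<forall>i\<in>{1..n}. row_mset nu W i = row_mset nu T i)
               \<and> col_distinct n nu W \<and> (\<forall>j. col_set n nu W j = col_set n nu F j)}"

lemma weyl_vec_WS: "weyl_vec n nu T F = (if tableau n nu F \<and> col_strict n nu F then
   (\<Sum>W\<in>WS n nu T F. (- 1) ^ col_inv n nu W) else 0)"
  unfolding weyl_vec_def WS_def by simp

definition key :: "nat \<Rightarrow> (nat \<Rightarrow> nat) \<Rightarrow> (nat \<Rightarrow> nat \<Rightarrow> nat) \<Rightarrow> nat list" where
  "key n nu X = map (\<lambda>i. \<Sum>j=1..nu i. X i j) [1..<Suc n]"

lemma tab_eqI:
  assumes "tableau n nu A" "tableau n nu B" "\<And>i j. in_diag n nu i j \<Longrightarrow> A i j = B i j"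
  shows "A = B"
proof (intro ext)
  fix i j show "A i j = B i j"
    using assms tab_out[OF assms(1)] tab_out[OF assms(2)] by (cases "in_diag n nu i j") auto
qed

lemma std_rows_eq:
  assumes T: "T \<in> Std n nu" and F: "F \<in> Std n nu"
    and r: "\<forall>i\<in>{1..n}. row_mset nu T i = row_mset nu F i"
  shows "T = F"
proof (rule tab_eqI)
  show "tableau n nu T" "tableau n nu F" using T F unfolding Std_def by auto
  fix i j assume d: "in_diag n nu i j"
  then have i: "i \<in> {1..n}" unfolding in_diag_def by auto
  have srt: "sorted (map (X i) [1..<Suc (nu i)])" if "X \<in> Std n nu" for X
  proof -
    have rw: "row_weak n nu X" using that unfolding Std_def by auto
    show ?thesis unfolding sorted_iff_nth_mono
    proof (intro allI impI)
      fix a b assume ab: "a \<le> b" "b < length (map (X i) [1..<Suc (nu i)])"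
      then show "map (X i) [1..<Suc (nu i)] ! a \<le> map (X i) [1..<Suc (nu i)] ! b"
        using rw i unfolding row_weak_def in_diag_def
        by (auto simp: nth_upt simp del: upt_Suc)
    qed
  qed
  have "mset (map (T i) [1..<Suc (nu i)]) = mset (map (F i) [1..<Suc (nu i)])"
    using r i unfolding row_mset_def by auto
  then have "map (T i) [1..<Suc (nu i)] = map (F i) [1..<Suc (nu i)]"
    using srt[OF T] srt[OF F] by (metis properties_for_sort)
  then have "map (T i) [1..<Suc (nu i)] ! (j - 1) = map (F i) [1..<Suc (nu i)] ! (j - 1)" by (simp only:)
  moreover have "j - 1 < nu i" "1 \<le> j" using d unfolding in_diag_def by auto
  ultimately show "T i j = F i j" by (simp add: nth_upt del: upt_Suc)
qed



lemma tri:
  assumes T: "T \<in> Std n nu" and F: "F \<in> Std n nu" and W: "W \<in> WS n nu T F"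
  shows "(W = F \<and> T = F) \<or> key n nu F < key n nu T"
proof (cases "\<forall>i j. in_diag n nu i j \<longrightarrow> W i j = F i j")
  case True
  have tW: "tableau n nu W" and tF: "tableau n nu F" using W F unfolding WS_def Std_def by auto
  have WF: "W = F" by (rule tab_eqI[OF tW tF]) (use True in auto)
  have "\<forall>i\<in>{1..n}. row_mset nu T i = row_mset nu F i" using W WF unfolding WS_def by auto
  then have "T = F" by (rule std_rows_eq[OF T F])
  then show ?thesis using WF by simp
next
  case False
  define P where "P i \<longleftrightarrow> (\<exists>j. in_diag n nu i j \<and> W i j \<noteq> F i j)" for i
  have ex: "\<exists>i. P i" using False unfolding P_def by auto
  define i0 where "i0 = (LEAST i. P i)"
  have Pi0: "P i0" unfolding i0_def using ex by (metis LeastI)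
  have below: "\<And>i j. i < i0 \<Longrightarrow> in_diag n nu i j \<Longrightarrow> W i j = F i j"
    using not_less_Least unfolding i0_def P_def by blast
  obtain j0 where j0: "in_diag n nu i0 j0" "W i0 j0 \<noteq> F i0 j0" using Pi0 unfolding P_def by auto
  have i0r: "1 \<le> i0" "i0 \<le> n" using j0 unfolding in_diag_def by auto
  have cd: "col_distinct n nu W" and cs: "\<And>j. col_set n nu W j = col_set n nu F j"
    and rows: "\<forall>i\<in>{1..n}. row_mset nu W i = row_mset nu T i" using W unfolding WS_def by auto
  have cF: "col_strict n nu F" using F unfolding Std_def by auto
  have ge: "F i0 j \<le> W i0 j" if d: "in_diag n nu i0 j" for j
  proof -
    have "W i0 j \<in> col_set n nu W j" using d unfolding col_set_def by auto
    then have "W i0 j \<in> col_set n nu F j" using cs by simp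
    then obtain i'' where i'': "in_diag n nu i'' j" "W i0 j = F i'' j" unfolding col_set_def by auto
    show ?thesis
    proof (cases "i'' < i0")
      case True
      then have "W i'' j = F i'' j" using below i'' by auto
      then have "W i0 j = W i'' j" using i'' by simp
      moreover have "W i0 j \<noteq> W i'' j" using cd d i''(1) True unfolding col_distinct_def by auto
      ultimately show ?thesis by simp
    next
      case False
      then consider "i'' = i0" | "i0 < i''" by linarith
      then show ?thesis
      proof cases
        case 1 then show ?thesis using i'' by simp
      next
        case 2 then have "F i0 j < F i'' j" using cF d i''(1) unfolding col_strict_def by auto
        then show ?thesis using i'' by simp
      qed
    qed
  qed
  have fin: "finite {1..nu i0}" by simp
  have j0m: "j0 \<in> {1..nu i0}" using j0 unfolding in_diag_def by auto
  have dj: "in_diag n nu i0 j" if "j \<in> {1..nu i0}" for j using that i0r unfolding in_diag_def by auto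
  have lt: "(\<Sum>j=1..nu i0. F i0 j) < (\<Sum>j=1..nu i0. W i0 j)"
    apply (rule sum_strict_mono_ex1[OF fin])
    using ge dj apply blast
    using ge[OF j0(1)] j0 j0m by (intro bexI[of _ j0]) auto
  have rs: "(\<Sum>j=1..nu i. W i j) = (\<Sum>j=1..nu i. T i j)" if "i \<in> {1..n}" for i
    using rows that rowsum by metis
  have rsF: "(\<Sum>j=1..nu i. F i j) = (\<Sum>j=1..nu i. T i j)" if "1 \<le> i" "i < i0" for i
  proof -
    have "(\<Sum>j=1..nu i. F i j) = (\<Sum>j=1..nu i. W i j)"
      using below[of i] that i0r unfolding in_diag_def by (intro sum.cong) auto
    then show ?thesis using rs that i0r by auto
  qed
  let ?f = "\<lambda>X i. \<Sum>j=1..nu i. X i j"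
  have "key n nu F < key n nu T"
    unfolding list_less_def lexord_take_index_conv
  proof (intro disjI2 exI[of _ "i0 - 1"] conjI)
    show "i0 - 1 < min (length (key n nu F)) (length (key n nu T))" using i0r unfolding key_def by simp
    have tk: "take (i0 - 1) [1..<Suc n] = [1..<i0]" using i0r by (simp add: take_upt del: upt_Suc)
    show "take (i0 - 1) (key n nu F) = take (i0 - 1) (key n nu T)"
      unfolding key_def take_map tk using rsF by (intro map_cong) auto
    have "key n nu F ! (i0 - 1) = ?f F i0" "key n nu T ! (i0 - 1) = ?f T i0"
      unfolding key_def using i0r by (auto simp: nth_upt simp del: upt_Suc)
    then show "(key n nu F ! (i0 - 1), key n nu T ! (i0 - 1)) \<in> {(u, v). u < v}"
      using lt rs[of i0] i0r by auto
  qed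
  then show ?thesis by simp
qed



lemma self_one:
  assumes T: "T \<in> Std n nu" shows "weyl_vec n nu T T = (1::'a::comm_ring_1)"
proof -
  have tT: "tableau n nu T" and cT: "col_strict n nu T" using T unfolding Std_def by auto
  have cdT: "col_distinct n nu T" using cT unfolding col_distinct_def col_strict_def
    by (metis less_irrefl nat_neq_iff)
  have "WS n nu T T = {T}"
  proof
    show "{T} \<subseteq> WS n nu T T" using tT cdT unfolding WS_def by auto
    show "WS n nu T T \<subseteq> {T}"
    proof
      fix W assume "W \<in> WS n nu T T"
      from tri[OF T T this] show "W \<in> {T}" by auto
    qed
  qed
  moreover have "col_inv n nu T = 0"
  proof -
    have "{(i, i', j). in_diag n nu i j \<and> in_diag n nu i' j \<and> i < i' \<and> T i' j < T i j} = {}"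
      using cT unfolding col_strict_def by (auto dest: less_not_sym)
    then show ?thesis unfolding col_inv_def by (metis card.empty)
  qed
  ultimately show ?thesis unfolding weyl_vec_WS using tT cT by simp
qed

lemma indep:
  fixes e :: "_ \<Rightarrow> 'a::comm_ring_1"
  assumes fS: "finite S" and SS: "S \<subseteq> Std n nu"
    and z: "\<And>F. (\<Sum>T\<in>S. e T * weyl_vec n nu T F) = 0"
  shows "\<forall>T\<in>S. e T = 0"
proof (rule ccontr)
  assume "\<not> (\<forall>T\<in>S. e T = 0)"
  define S' where "S' = {T\<in>S. e T \<noteq> 0}"
  have ne: "S' \<noteq> {}" and fS': "finite S'" using \<open>\<not> _\<close> fS unfolding S'_def by auto
  define M where "M = Max (key n nu ` S')"
  have "M \<in> key n nu ` S'" unfolding M_def using ne fS' by (intro Max_in) auto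
  then obtain T0 where T0: "T0 \<in> S'" "key n nu T0 = M" by auto
  have maxk: "key n nu T \<le> M" if "T \<in> S'" for T unfolding M_def using fS' that by (intro Max_ge) auto
  have T0S: "T0 \<in> S" "e T0 \<noteq> 0" using T0 unfolding S'_def by auto
  have T0std: "T0 \<in> Std n nu" using T0S SS by auto
  have rest: "e T * weyl_vec n nu T T0 = 0" if "T \<in> S - {T0}" for T
  proof (cases "e T = 0")
    case False
    then have TS': "T \<in> S'" using that unfolding S'_def by auto
    have Tstd: "T \<in> Std n nu" using that SS by auto
    have "weyl_vec n nu T T0 = (0::'a)"
    proof (rule ccontr)
      assume "weyl_vec n nu T T0 \<noteq> (0::'a)"
      then have "WS n nu T T0 \<noteq> {}" unfolding weyl_vec_WS by (auto split: if_splits)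
      then obtain W where "W \<in> WS n nu T T0" by auto
      from tri[OF Tstd T0std this] have "key n nu T0 < key n nu T" using that by auto
      then show False using maxk[OF TS'] T0 by auto
    qed
    then show ?thesis by simp
  qed simp
  have "(\<Sum>T\<in>S. e T * weyl_vec n nu T T0) = e T0 * weyl_vec n nu T0 T0 + (\<Sum>T\<in>S - {T0}. e T * weyl_vec n nu T T0)"
    using fS T0S by (simp add: sum.remove)
  also have "(\<Sum>T\<in>S - {T0}. e T * weyl_vec n nu T T0) = 0" by (rule sum.neutral) (use rest in auto)
  also have "weyl_vec n nu T0 T0 = (1::'a)" by (rule self_one[OF T0std])
  finally show False using z T0S by simp
qed



locale bset =
  fixes n r m :: nat and mu :: "nat \<Rightarrow> nat" and F :: "nat \<Rightarrow> nat \<Rightarrow> nat"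
  assumes part: "is_partition n r mu" and n1: "1 \<le> n"
    and tF: "tableau n (shape_plus m mu) F" and cF: "col_strict n (shape_plus m mu) F"
begin

abbreviation "a \<equiv> mu 2"
abbreviation "mp \<equiv> shape_plus m mu"

lemma a_le: "a \<le> mu 1" using part_mono[OF part, of 1 2] by simp
lemma le_a: "2 \<le> i \<Longrightarrow> mu i \<le> a" using part_mono[OF part, of 2 i] by simp
lemma le_1: "1 \<le> i \<Longrightarrow> mu i \<le> mu 1" using part_mono[OF part, of 1 i] by simp

lemma mp1: "mp 1 = mu 1 + m" and mpi: "i \<noteq> 1 \<Longrightarrow> mp i = mu i"
  unfolding shape_plus_def by auto

lemma diag_sub: "in_diag n mu i j \<Longrightarrow> in_diag n mp i j"
  unfolding in_diag_def shape_plus_def by auto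

lemma diag_tall: "j \<le> a \<Longrightarrow> in_diag n mp i j \<longleftrightarrow> in_diag n mu i j"
  using a_le unfolding in_diag_def shape_plus_def by auto

lemma diag_row2: "in_diag n mp i j \<Longrightarrow> 2 \<le> i \<Longrightarrow> j \<le> a"
  using le_a unfolding in_diag_def shape_plus_def by fastforce

lemma diag_row2': "in_diag n mu i j \<Longrightarrow> 2 \<le> i \<Longrightarrow> j \<le> a"
  using diag_row2 diag_sub by blast

lemma diag_short: "in_diag n mp i j \<Longrightarrow> a < j \<Longrightarrow> i = 1"
  using diag_row2 unfolding in_diag_def by fastforce

lemma diag_short': "in_diag n mu i j \<Longrightarrow> a < j \<Longrightarrow> i = 1"
  using diag_short diag_sub by blast

lemma colset_short: "in_diag n mp 1 j \<Longrightarrow> a < j \<Longrightarrow> col_set n mp X j = {X 1 j}"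
  unfolding col_set_def using diag_short by blast

lemma colset_short': "in_diag n mu 1 j \<Longrightarrow> a < j \<Longrightarrow> col_set n mu X j = {X 1 j}"
  unfolding col_set_def using diag_short' by blast

lemma colset_tall: "j \<le> a \<Longrightarrow> col_set n mp X j = col_set n mu X j"
  unfolding col_set_def using diag_tall by auto

lemma diag1: "in_diag n mp 1 j \<longleftrightarrow> 1 \<le> j \<and> j \<le> mu 1 + m"
  using n1 unfolding in_diag_def shape_plus_def by auto

lemma diag1': "in_diag n mu 1 j \<longleftrightarrow> 1 \<le> j \<and> j \<le> mu 1"
  using n1 unfolding in_diag_def by auto

definition "L = map (F 1) [Suc a..<Suc (mu 1 + m)]"

lemma L_len: "length L = mu 1 + m - a" unfolding L_def by (simp del: upt_Suc)

lemma L_set: "set L \<subseteq> {1..n}"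
proof
  fix x assume "x \<in> set L"
  then obtain j where j: "j \<in> {Suc a..<Suc (mu 1 + m)}" "x = F 1 j" unfolding L_def by (auto simp del: upt_Suc)
  then have "in_diag n mp 1 j" using diag1 by auto
  then show "x \<in> {1..n}" using tab_val[OF tF] j by auto
qed

end



locale bset2 = bset +
  assumes sub: "replicate_mset m 1 \<subseteq># mset L"
begin

definition "L' = sorted_list_of_multiset (mset L - replicate_mset m 1)"
definition "F0 = (\<lambda>i j. if in_diag n mu i j then (if j \<le> a then F i j else L' ! (j - Suc a)) else 0)"

lemma L'_mset: "mset L' = mset L - replicate_mset m 1" unfolding L'_def by simp
lemma L_mset: "mset L = mset L' + replicate_mset m 1" unfolding L'_mset using sub by simp

lemma L'_len: "length L' = mu 1 - a"
proof -
  have "length L' = size (mset L')" by simp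
  also have "\<dots> = size (mset L) - m" unfolding L'_mset using sub by (simp add: size_Diff_submset)
  finally show ?thesis using L_len by simp
qed

lemma L'_set: "set L' \<subseteq> {1..n}"
proof -
  have "set L' = set_mset (mset L - replicate_mset m 1)" by (metis L'_mset set_mset_mset)
  also have "\<dots> \<subseteq> set_mset (mset L)" by (meson in_diffD subsetI)
  finally show ?thesis using L_set by auto
qed

lemma F0_short: "map (F0 1) [Suc a..<Suc (mu 1)] = L'"
proof (rule map_upt_eqI)
  show "length L' = Suc (mu 1) - Suc a" using L'_len by simp
  fix i assume i: "i < length L'"
  then have "in_diag n mu 1 (Suc a + i)" using L'_len diag1' by auto
  then show "L' ! i = F0 1 (Suc a + i)" unfolding F0_def by simp
qed

lemma F0_tall: "j \<le> a \<Longrightarrow> in_diag n mu i j \<Longrightarrow> F0 i j = F i j"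
  unfolding F0_def by simp

lemma F0_tab: "tableau n mu F0"
  unfolding tableau_def
proof (intro allI)
  fix i j
  show "if in_diag n mu i j then F0 i j \<in> {1..n} else F0 i j = 0"
  proof (cases "in_diag n mu i j")
    case True
    show ?thesis
    proof (cases "j \<le> a")
      case True2: True
      then show ?thesis using True tab_val[OF tF diag_sub[OF True]] F0_tall by simp
    next
      case False
      then have "i = 1" using diag_short' True by simp
      then have "j - Suc a < length L'" using True False L'_len unfolding in_diag_def by auto
      then have "L' ! (j - Suc a) \<in> {1..n}" using L'_set nth_mem by blast
      then show ?thesis using True False unfolding F0_def by simp
    qed
  qed (simp add: F0_def)
qed

lemma F0_cs: "col_strict n mu F0"
  unfolding col_strict_def
proof (intro allI impI)
  fix i i' j assume h: "in_diag n mu i j \<and> in_diag n mu i' j \<and> i < i'"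
  then have "2 \<le> i'" unfolding in_diag_def by auto
  then have "j \<le> a" using diag_row2' h by blast
  then show "F0 i j < F0 i' j" using h F0_tall cF diag_sub unfolding col_strict_def by auto
qed

end


declare upt_Suc[simp del]

lemma col_set_cong: "(\<And>i. in_diag n nu i j \<Longrightarrow> X i j = Y i j) \<Longrightarrow> col_set n nu X j = col_set n nu Y j"
  unfolding col_set_def by force

lemma row_cong: "(\<And>j. 1 \<le> j \<Longrightarrow> j \<le> nu i \<Longrightarrow> X i j = Y i j) \<Longrightarrow> row_mset nu X i = row_mset nu Y i"
  unfolding row_mset_def by (intro arg_cong[where f=mset] map_cong) auto

context bset2 begin

definition "hh W = (\<lambda>i j. if in_diag n mu i j then (if j \<le> a then W i j else F0 i j) else 0)"
definition "gg W = (\<lambda>i j. if in_diag n mp i j then (if j \<le> a then W i j else F i j) else 0)"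

lemma short_W: "W \<in> WS n mp X F \<Longrightarrow> in_diag n mp 1 j \<Longrightarrow> a < j \<Longrightarrow> W 1 j = F 1 j"
  using colset_short[of j W] colset_short[of j F] unfolding WS_def by auto

lemma short_W': "W \<in> WS n mu X F0 \<Longrightarrow> in_diag n mu 1 j \<Longrightarrow> a < j \<Longrightarrow> W 1 j = F0 1 j"
  using colset_short'[of j W] colset_short'[of j F0] unfolding WS_def by auto

lemma tall_in: "1 \<le> j \<Longrightarrow> j \<le> a \<Longrightarrow> in_diag n mu 1 j"
  using diag1' a_le by auto

lemma hh_mem:
  assumes W: "W \<in> WS n mp (tplus m X) F"
  shows "hh W \<in> WS n mu X F0"
proof -
  have tW: "tableau n mp W" and rW: "\<forall>i\<in>{1..n}. row_mset mp W i = row_mset mp (tplus m X) i"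
    and cdW: "col_distinct n mp W" and csW: "\<And>j. col_set n mp W j = col_set n mp F j"
    using W unfolding WS_def by auto
  have t: "tableau n mu (hh W)"
    unfolding tableau_def
  proof (intro allI)
    fix i j
    show "if in_diag n mu i j then hh W i j \<in> {1..n} else hh W i j = 0"
      using tab_val[OF tW diag_sub] tab_val[OF F0_tab] unfolding hh_def by auto
  qed
  have r: "\<forall>i\<in>{1..n}. row_mset mu (hh W) i = row_mset mu X i"
  proof
    fix i assume i: "i \<in> {1..n}"
    show "row_mset mu (hh W) i = row_mset mu X i"
    proof (cases "i = 1")
      case True
      have A: "row_mset mu (hh W) 1 = mset (map (W 1) [1..<Suc a]) + mset L'"
      proof -
        have "row_mset mu (hh W) 1 = mset (map (hh W 1) [1..<Suc a]) + mset (map (hh W 1) [Suc a..<Suc (mu 1)])"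
          by (rule row_split[where nu=mu and i=1, OF a_le])
        moreover have "map (hh W 1) [1..<Suc a] = map (W 1) [1..<Suc a]"
          using tall_in unfolding hh_def by (intro map_cong) (auto simp del: upt_Suc)
        moreover have "map (hh W 1) [Suc a..<Suc (mu 1)] = map (F0 1) [Suc a..<Suc (mu 1)]"
          using diag1' unfolding hh_def by (intro map_cong) (auto simp del: upt_Suc)
        ultimately show ?thesis using F0_short by (simp only:)
      qed
      have B: "row_mset mp W 1 = mset (map (W 1) [1..<Suc a]) + mset L"
      proof -
        have "row_mset mp W 1 = mset (map (W 1) [1..<Suc a]) + mset (map (W 1) [Suc a..<Suc (mp 1)])"
          by (rule row_split) (use a_le mp1 in simp)
        moreover have "map (W 1) [Suc a..<Suc (mp 1)] = L"
          unfolding L_def mp1 using short_W[OF W] diag1 by (intro map_cong) (auto simp del: upt_Suc)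
        ultimately show ?thesis by (simp only:)
      qed
      have "row_mset mp W 1 = replicate_mset m 1 + row_mset mu X 1"
        using rW n1 rowplus1[of m mu X] by auto
      then have "mset (map (W 1) [1..<Suc a]) + mset L' + replicate_mset m 1 = replicate_mset m 1 + row_mset mu X 1"
        using B L_mset by (simp add: add.assoc)
      then show ?thesis using A True by (simp add: add.commute)
    next
      case False
      then have i2: "2 \<le> i" using i by auto
      have "row_mset mu (hh W) i = row_mset mu W i"
        using le_a[OF i2] i unfolding hh_def in_diag_def by (intro row_cong) auto
      also have "\<dots> = row_mset mp W i" unfolding row_mset_def using mpi[OF False] by simp
      also have "\<dots> = row_mset mp (tplus m X) i" using rW i by auto
      also have "\<dots> = row_mset mu X i" by (rule rowplus_other[OF False])
      finally show ?thesis .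
    qed
  qed
  have cd: "col_distinct n mu (hh W)"
    unfolding col_distinct_def
  proof (intro allI impI)
    fix i i' j assume h: "in_diag n mu i j \<and> in_diag n mu i' j \<and> i \<noteq> i'"
    then have "2 \<le> i \<or> 2 \<le> i'" unfolding in_diag_def by auto
    then have "j \<le> a" using diag_row2' h by blast
    then show "hh W i j \<noteq> hh W i' j" using h cdW diag_sub unfolding hh_def col_distinct_def by auto
  qed
  have cs: "col_set n mu (hh W) j = col_set n mu F0 j" for j
  proof (cases "j \<le> a")
    case True
    have "col_set n mu (hh W) j = col_set n mu W j" unfolding hh_def using True by (intro col_set_cong) auto
    also have "\<dots> = col_set n mp W j" using colset_tall[OF True] by simp
    also have "\<dots> = col_set n mp F j" by (rule csW)
    also have "\<dots> = col_set n mu F j" using colset_tall[OF True] by simp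
    also have "\<dots> = col_set n mu F0 j" using F0_tall True by (intro col_set_cong) auto
    finally show ?thesis .
  next
    case False
    then show ?thesis unfolding hh_def by (intro col_set_cong) auto
  qed
  show ?thesis unfolding WS_def using t r cd cs by auto
qed

end

declare upt_Suc[simp del]

context bset2 begin

lemma gg_mem:
  assumes W: "W \<in> WS n mu X F0"
  shows "gg W \<in> WS n mp (tplus m X) F"
proof -
  have tW: "tableau n mu W" and rW: "\<forall>i\<in>{1..n}. row_mset mu W i = row_mset mu X i"
    and cdW: "col_distinct n mu W" and csW: "\<And>j. col_set n mu W j = col_set n mu F0 j"
    using W unfolding WS_def by auto
  have t: "tableau n mp (gg W)"
    unfolding tableau_def
  proof (intro allI)
    fix i j
    show "if in_diag n mp i j then gg W i j \<in> {1..n} else gg W i j = 0"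
      using tab_val[OF tW] tab_val[OF tF] diag_tall unfolding gg_def by auto
  qed
  have r: "\<forall>i\<in>{1..n}. row_mset mp (gg W) i = row_mset mp (tplus m X) i"
  proof
    fix i assume i: "i \<in> {1..n}"
    show "row_mset mp (gg W) i = row_mset mp (tplus m X) i"
    proof (cases "i = 1")
      case True
      have A: "row_mset mp (gg W) 1 = mset (map (W 1) [1..<Suc a]) + mset L"
      proof -
        have "row_mset mp (gg W) 1 = mset (map (gg W 1) [1..<Suc a]) + mset (map (gg W 1) [Suc a..<Suc (mp 1)])"
          by (rule row_split[where nu=mp and i=1]) (use a_le mp1 in simp)
        moreover have "map (gg W 1) [1..<Suc a] = map (W 1) [1..<Suc a]"
          using tall_in diag_sub unfolding gg_def by (intro map_cong) auto
        moreover have "map (gg W 1) [Suc a..<Suc (mp 1)] = L"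
          unfolding L_def mp1 gg_def using diag1 by (intro map_cong) auto
        ultimately show ?thesis by (simp only:)
      qed
      have B: "row_mset mu W 1 = mset (map (W 1) [1..<Suc a]) + mset L'"
      proof -
        have "row_mset mu W 1 = mset (map (W 1) [1..<Suc a]) + mset (map (W 1) [Suc a..<Suc (mu 1)])"
          by (rule row_split[where nu=mu and i=1, OF a_le])
        moreover have "map (W 1) [Suc a..<Suc (mu 1)] = map (F0 1) [Suc a..<Suc (mu 1)]"
          using short_W'[OF W] diag1' by (intro map_cong) auto
        ultimately show ?thesis using F0_short by (simp only:)
      qed
      have "row_mset mu W 1 = row_mset mu X 1" using rW n1 by auto
      then have "row_mset mp (gg W) 1 = replicate_mset m 1 + row_mset mu X 1"
        using A B L_mset by (simp add: add.commute add.left_commute)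
      then show ?thesis using True rowplus1[of m mu X] by simp
    next
      case False
      then have i2: "2 \<le> i" using i by auto
      have "row_mset mp (gg W) i = row_mset mu (gg W) i" unfolding row_mset_def using mpi[OF False] by simp
      also have "\<dots> = row_mset mu W i"
        using le_a[OF i2] i mpi[OF False] unfolding gg_def in_diag_def by (intro row_cong) auto
      also have "\<dots> = row_mset mu X i" using rW i by auto
      also have "\<dots> = row_mset mp (tplus m X) i" by (rule rowplus_other[OF False, symmetric])
      finally show ?thesis .
    qed
  qed
  have cd: "col_distinct n mp (gg W)"
    unfolding col_distinct_def
  proof (intro allI impI)
    fix i i' j assume h: "in_diag n mp i j \<and> in_diag n mp i' j \<and> i \<noteq> i'"
    then have "2 \<le> i \<or> 2 \<le> i'" unfolding in_diag_def by auto
    then have ja: "j \<le> a" using diag_row2 h by blast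
    then show "gg W i j \<noteq> gg W i' j" using h cdW diag_tall[OF ja] unfolding gg_def col_distinct_def by auto
  qed
  have cs: "col_set n mp (gg W) j = col_set n mp F j" for j
  proof (cases "j \<le> a")
    case True
    have "col_set n mp (gg W) j = col_set n mu (gg W) j" using colset_tall[OF True] by simp
    also have "\<dots> = col_set n mu W j" unfolding gg_def using True diag_sub by (intro col_set_cong) auto
    also have "\<dots> = col_set n mu F0 j" by (rule csW)
    also have "\<dots> = col_set n mu F j" using F0_tall True by (intro col_set_cong) auto
    also have "\<dots> = col_set n mp F j" using colset_tall[OF True] by simp
    finally show ?thesis .
  next
    case False
    then show ?thesis unfolding gg_def by (intro col_set_cong) auto
  qed
  show ?thesis unfolding WS_def using t r cd cs by auto
qed

lemma hg: "W \<in> WS n mu X F0 \<Longrightarrow> hh (gg W) = W"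
proof -
  assume W: "W \<in> WS n mu X F0"
  have t1: "tableau n mu (hh (gg W))" using hh_mem[OF gg_mem[OF W]] unfolding WS_def by auto
  have t2: "tableau n mu W" using W unfolding WS_def by auto
  show ?thesis
  proof (rule tab_eqI[OF t1 t2])
    fix i j assume d: "in_diag n mu i j"
    show "hh (gg W) i j = W i j"
    proof (cases "j \<le> a")
      case True then show ?thesis using d diag_sub unfolding hh_def gg_def by auto
    next
      case False
      then have "i = 1" using diag_short' d by simp
      then show ?thesis using d False short_W'[OF W] unfolding hh_def by auto
    qed
  qed
qed

lemma gh: "W \<in> WS n mp (tplus m X) F \<Longrightarrow> gg (hh W) = W"
proof -
  assume W: "W \<in> WS n mp (tplus m X) F"
  have t1: "tableau n mp (gg (hh W))" using gg_mem[OF hh_mem[OF W]] unfolding WS_def by auto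
  have t2: "tableau n mp W" using W unfolding WS_def by auto
  show ?thesis
  proof (rule tab_eqI[OF t1 t2])
    fix i j assume d: "in_diag n mp i j"
    show "gg (hh W) i j = W i j"
    proof (cases "j \<le> a")
      case True then show ?thesis using d diag_tall unfolding hh_def gg_def by auto
    next
      case False
      then have "i = 1" using diag_short d by simp
      then show ?thesis using d False short_W[OF W] unfolding gg_def by auto
    qed
  qed
qed

lemma colinv_hh: "col_inv n mu (hh W) = col_inv n mp W"
proof -
  have "{(i, i', j). in_diag n mu i j \<and> in_diag n mu i' j \<and> i < i' \<and> hh W i' j < hh W i j}
      = {(i, i', j). in_diag n mp i j \<and> in_diag n mp i' j \<and> i < i' \<and> W i' j < W i j}"
  proof (intro set_eqI iffI)
    fix x assume "x \<in> {(i, i', j). in_diag n mu i j \<and> in_diag n mu i' j \<and> i < i' \<and> hh W i' j < hh W i j}"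
    then obtain i i' j where x: "x = (i, i', j)" and h: "in_diag n mu i j" "in_diag n mu i' j" "i < i'" "hh W i' j < hh W i j"
      by auto
    have "2 \<le> i'" using h unfolding in_diag_def by auto
    then have ja: "j \<le> a" using diag_row2' h by blast
    show "x \<in> {(i, i', j). in_diag n mp i j \<and> in_diag n mp i' j \<and> i < i' \<and> W i' j < W i j}"
      using h ja diag_tall[OF ja] x unfolding hh_def by auto
  next
    fix x assume "x \<in> {(i, i', j). in_diag n mp i j \<and> in_diag n mp i' j \<and> i < i' \<and> W i' j < W i j}"
    then obtain i i' j where x: "x = (i, i', j)" and h: "in_diag n mp i j" "in_diag n mp i' j" "i < i'" "W i' j < W i j"
      by auto
    have "2 \<le> i'" using h unfolding in_diag_def by auto
    then have ja: "j \<le> a" using diag_row2 h by blast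
    show "x \<in> {(i, i', j). in_diag n mu i j \<and> in_diag n mu i' j \<and> i < i' \<and> hh W i' j < hh W i j}"
      using h ja diag_tall[OF ja] x unfolding hh_def by auto
  qed
  then show ?thesis unfolding col_inv_def by simp
qed

lemma main_eq: "(weyl_vec n mp (tplus m X) F :: 'a::comm_ring_1) = weyl_vec n mu X F0"
proof -
  have bij: "bij_betw hh (WS n mp (tplus m X) F) (WS n mu X F0)"
    by (rule bij_betw_byWitness[where f'=gg]) (auto intro: hh_mem gg_mem hg gh)
  have "(\<Sum>W\<in>WS n mp (tplus m X) F. (- 1 :: 'a) ^ col_inv n mp W)
      = (\<Sum>W\<in>WS n mp (tplus m X) F. (- 1 :: 'a) ^ col_inv n mu (hh W))"
    using colinv_hh by simp
  also have "\<dots> = (\<Sum>W\<in>WS n mu X F0. (- 1 :: 'a) ^ col_inv n mu W)"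
    by (rule sum.reindex_bij_betw[OF bij])
  finally show ?thesis unfolding weyl_vec_WS using tF cF F0_tab F0_cs by simp
qed

end

declare upt_Suc[simp del]

context bset begin

lemma zero_case:
  assumes lt: "count (mset L) 1 < m" and ones: "a \<le> count (row_mset mu X 1) 1"
  shows "WS n mp (tplus m X) F = {}"
proof (rule ccontr)
  assume "WS n mp (tplus m X) F \<noteq> {}"
  then obtain W where W: "W \<in> WS n mp (tplus m X) F" by auto
  have rW: "\<forall>i\<in>{1..n}. row_mset mp W i = row_mset mp (tplus m X) i"
    and csW: "\<And>j. col_set n mp W j = col_set n mp F j" using W unfolding WS_def by auto
  have sW: "W 1 j = F 1 j" if "in_diag n mp 1 j" "a < j" for j
    using colset_short[OF that, of W] colset_short[OF that, of F] csW by auto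
  have "row_mset mp W 1 = mset (map (W 1) [1..<Suc a]) + mset (map (W 1) [Suc a..<Suc (mp 1)])"
    by (rule row_split[where nu=mp and i=1]) (use a_le mp1 in simp)
  moreover have "map (W 1) [Suc a..<Suc (mp 1)] = L"
    unfolding L_def mp1 using sW diag1 by (intro map_cong) auto
  ultimately have B: "row_mset mp W 1 = mset (map (W 1) [1..<Suc a]) + mset L" by (simp only:)
  have "row_mset mp W 1 = replicate_mset m 1 + row_mset mu X 1"
    using rW n1 rowplus1[of m mu X] by auto
  then have "m + count (row_mset mu X 1) 1 = count (mset (map (W 1) [1..<Suc a])) 1 + count (mset L) 1"
    using B by (metis count_replicate_mset count_union)
  moreover have "count (mset (map (W 1) [1..<Suc a])) 1 \<le> a"
    by (metis count_le_size diff_Suc_1 length_map length_upt size_mset)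
  ultimately show False using lt ones by linarith
qed

end

lemma grading:
  assumes n1: "1 \<le> n" and nu1: "\<And>i. 1 \<le> i \<Longrightarrow> nu i \<le> nu 1"
    and noX: "\<And>i. 2 \<le> i \<Longrightarrow> i \<le> n \<Longrightarrow> 1 \<notin># row_mset nu X i"
    and tF: "tableau n nu F" and cF: "col_strict n nu F"
    and W: "W \<in> WS n nu X F"
  shows "count (row_mset nu X 1) 1 = count (row_mset nu F 1) 1"
proof -
  have rW: "\<forall>i\<in>{1..n}. row_mset nu W i = row_mset nu X i"
    and csW: "\<And>j. col_set n nu W j = col_set n nu F j" using W unfolding WS_def by auto
  have inrow: "W i j \<in># row_mset nu W i" if "in_diag n nu i j" for i j
    using that unfolding row_mset_def in_diag_def by (auto simp: atLeastLessThanSuc_atLeastAtMost)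
  have "{j \<in> {1..nu 1}. W 1 j = 1} = {j \<in> {1..nu 1}. F 1 j = 1}"
  proof (intro set_eqI iffI)
    fix j assume j: "j \<in> {j \<in> {1..nu 1}. W 1 j = 1}"
    then have d1: "in_diag n nu 1 j" using n1 unfolding in_diag_def by auto
    then have "1 \<in> col_set n nu W j" using j unfolding col_set_def by force
    then have "1 \<in> col_set n nu F j" using csW by simp
    then obtain i where i: "in_diag n nu i j" "F i j = 1" unfolding col_set_def by auto
    have "i = 1"
    proof (rule ccontr)
      assume "i \<noteq> 1"
      then have "1 < i" using i unfolding in_diag_def by auto
      then have "F 1 j < F i j" using cF d1 i(1) unfolding col_strict_def by blast
      moreover have "F 1 j \<ge> 1" using tab_val[OF tF d1] by auto
      ultimately show False using i by simp
    qed
    then show "j \<in> {j \<in> {1..nu 1}. F 1 j = 1}" using i j by auto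
  next
    fix j assume j: "j \<in> {j \<in> {1..nu 1}. F 1 j = 1}"
    then have d1: "in_diag n nu 1 j" using n1 unfolding in_diag_def by auto
    then have "1 \<in> col_set n nu F j" using j unfolding col_set_def by force
    then have "1 \<in> col_set n nu W j" using csW by simp
    then obtain i where i: "in_diag n nu i j" "W i j = 1" unfolding col_set_def by auto
    have "i = 1"
    proof (rule ccontr)
      assume "i \<noteq> 1"
      then have i2: "2 \<le> i" "i \<le> n" using i unfolding in_diag_def by auto
      have "1 \<in># row_mset nu W i" using inrow[OF i(1)] i by simp
      then have "1 \<in># row_mset nu X i" using rW i2 by auto
      then show False using noX[OF i2] by simp
    qed
    then show "j \<in> {j \<in> {1..nu 1}. W 1 j = 1}" using i j by auto
  qed
  moreover have "row_mset nu W 1 = row_mset nu X 1" using rW n1 by auto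
  moreover have "count (row_mset nu Y 1) 1 = card {j \<in> {1..nu 1}. Y 1 j = 1}" for Y
    unfolding row_mset_def by (rule count_map_upt)
  ultimately show ?thesis by metis
qed


declare upt_Suc[simp del]

lemma n0_eq: "weyl_vec 0 nu X F = weyl_vec 0 nu' Y F"
  unfolding weyl_vec_def in_diag_def tableau_def col_strict_def col_distinct_def col_set_def col_inv_def
  apply simp by (metis less_irrefl)

lemma nz_count:
  assumes n1: "1 \<le> n" and nu1: "\<And>i. 1 \<le> i \<Longrightarrow> nu i \<le> nu 1"
    and noX: "\<And>i. 2 \<le> i \<Longrightarrow> i \<le> n \<Longrightarrow> 1 \<notin># row_mset nu X i"
    and nz: "weyl_vec n nu X F \<noteq> (0::'a::comm_ring_1)"
  shows "tableau n nu F \<and> col_strict n nu F \<and> count (row_mset nu X 1) 1 = count (row_mset nu F 1) 1"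
proof -
  have tc: "tableau n nu F \<and> col_strict n nu F" using nz unfolding weyl_vec_WS by (auto split: if_splits)
  have "WS n nu X F \<noteq> {}" using nz unfolding weyl_vec_WS by (auto split: if_splits)
  then obtain W where W: "W \<in> WS n nu X F" by auto
  show ?thesis using grading[OF n1 nu1 noX _ _ W] tc by auto
qed

lemma std_noones:
  assumes T: "T \<in> Std n nu" and n1: "1 \<le> n" and nu1: "\<And>i. 1 \<le> i \<Longrightarrow> nu i \<le> nu 1"
    and i: "2 \<le> i" "i \<le> n"
  shows "1 \<notin># row_mset nu T i"
proof
  assume "1 \<in># row_mset nu T i"
  then obtain j where j: "j \<in> {1..nu i}" "T i j = 1" unfolding row_mset_def
    by (auto simp: atLeastLessThanSuc_atLeastAtMost)
  have di: "in_diag n nu i j" using j i unfolding in_diag_def by auto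
  have d1: "in_diag n nu 1 j" using j i n1 nu1[of i] unfolding in_diag_def by auto
  have "T 1 j < T i j" using T di d1 i unfolding Std_def col_strict_def by auto
  moreover have "1 \<le> T 1 j" using tab_val[OF _ d1] T unfolding Std_def by fastforce
  ultimately show False using j by simp
qed

lemma bad_zero:
  fixes c :: "_ \<Rightarrow> 'a::comm_ring_1"
  assumes n1: "1 \<le> n" and nu1: "\<And>i. 1 \<le> i \<Longrightarrow> nu i \<le> nu 1"
    and Uones: "b \<le> count (row_mset nu U 1) 1"
    and noU: "\<And>i. 2 \<le> i \<Longrightarrow> i \<le> n \<Longrightarrow> 1 \<notin># row_mset nu U i"
    and hyp: "weyl_vec n nu U = (\<lambda>F. \<Sum>T\<in>Std n nu. c T * weyl_vec n nu T F)"
  shows "\<forall>T\<in>{T\<in>Std n nu. count (row_mset nu T 1) 1 < b}. c T = 0"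
proof (rule indep)
  let ?B = "{T\<in>Std n nu. count (row_mset nu T 1) 1 < b}"
  show "finite ?B" using Std_finite by simp
  show "?B \<subseteq> Std n nu" by auto
  fix F
  have noT: "1 \<notin># row_mset nu T i" if "T \<in> Std n nu" "2 \<le> i" "i \<le> n" for T i
    using std_noones[OF that(1) n1 nu1 that(2,3)] .
  show "(\<Sum>T\<in>?B. c T * weyl_vec n nu T F) = 0"
  proof (cases "b \<le> count (row_mset nu F 1) 1")
    case True
    have "c T * weyl_vec n nu T F = 0" if "T \<in> ?B" for T
    proof (rule ccontr)
      assume "c T * weyl_vec n nu T F \<noteq> 0"
      then have "weyl_vec n nu T F \<noteq> (0::'a)" by auto
      from nz_count[OF n1 nu1 noT this] that True show False by auto
    qed
    then show ?thesis by simp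
  next
    case False
    have U0: "weyl_vec n nu U F = (0::'a)"
    proof (rule ccontr)
      assume "weyl_vec n nu U F \<noteq> (0::'a)"
      from nz_count[OF n1 nu1 noU this] Uones False show False by auto
    qed
    have rest: "c T * weyl_vec n nu T F = 0" if "T \<in> Std n nu - ?B" for T
    proof (rule ccontr)
      assume "c T * weyl_vec n nu T F \<noteq> 0"
      then have "weyl_vec n nu T F \<noteq> (0::'a)" by auto
      from nz_count[OF n1 nu1 noT this] that False show False by auto
    qed
    have "(\<Sum>T\<in>Std n nu. c T * weyl_vec n nu T F) = (\<Sum>T\<in>Std n nu - ?B. c T * weyl_vec n nu T F) + (\<Sum>T\<in>?B. c T * weyl_vec n nu T F)"
      using Std_finite by (intro sum.subset_diff) auto
    moreover have "(\<Sum>T\<in>Std n nu - ?B. c T * weyl_vec n nu T F) = 0" using rest by simp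
    moreover have "(\<Sum>T\<in>Std n nu. c T * weyl_vec n nu T F) = 0" using U0 hyp by metis
    ultimately show ?thesis by simp
  qed
qed


declare upt_Suc[simp del]

theorem lemma4p4:
  fixes lam mu :: "nat \<Rightarrow> nat" and n r p k d :: nat
    and U :: "nat \<Rightarrow> nat \<Rightarrow> nat" and c :: "(nat \<Rightarrow> nat \<Rightarrow> nat) \<Rightarrow> 'a::field"
  assumes "infinite (UNIV :: 'a set)" and "CHAR('a) = p" and "p > 0"
    and "is_partition n r lam" and "is_partition n r mu" and "mu 2 \<le> lam 1"
    and "k > 0" and "d > 0"
    and "U \<in> setA n lam mu"
    and "(weyl_vec n mu U :: _ \<Rightarrow> 'a) = (\<lambda>F. \<Sum>T\<in>Std n mu. c T * weyl_vec n mu T F)"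
  shows "(weyl_vec n (shape_plus (k * p ^ d) mu) (tplus (k * p ^ d) U) :: _ \<Rightarrow> 'a)
       = (\<lambda>F. \<Sum>T\<in>Std n mu. c T * weyl_vec n (shape_plus (k * p ^ d) mu) (tplus (k * p ^ d) T) F)"
proof
  note part = assms(5) and hyp = assms(10)
  define m where "m = k * p ^ d"
  fix F
  have "(weyl_vec n (shape_plus m mu) (tplus m U) F :: 'a)
       = (\<Sum>T\<in>Std n mu. c T * weyl_vec n (shape_plus m mu) (tplus m T) F)"
  proof (cases "n = 0")
    case True
    have "(weyl_vec n (shape_plus m mu) (tplus m U) F :: 'a) = weyl_vec n mu U F"
      using True n0_eq[of "shape_plus m mu" "tplus m U" F mu U] by simp
    also have "\<dots> = (\<Sum>T\<in>Std n mu. c T * weyl_vec n mu T F)" using hyp by metis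
    also have "\<dots> = (\<Sum>T\<in>Std n mu. c T * weyl_vec n (shape_plus m mu) (tplus m T) F)"
      using True n0_eq[of mu _ F "shape_plus m mu"] by (intro sum.cong) auto
    finally show ?thesis .
  next
    case False
    then have n1: "1 \<le> n" by simp
    have nu1: "\<And>i. 1 \<le> i \<Longrightarrow> mu i \<le> mu 1" using part_mono[OF part] by simp
    obtain t where t: "t \<le> lam 2" "card {j. in_diag n mu 1 j \<and> U 1 j = 1} = lam 1 + t"
      using assms(9) unfolding setA_def by auto
    have "{j. in_diag n mu 1 j \<and> U 1 j = 1} = {j \<in> {1..mu 1}. U 1 j = 1}"
      using n1 unfolding in_diag_def by auto
    then have "count (row_mset mu U 1) 1 = lam 1 + t"
      using t unfolding row_mset_def count_map_upt by simp
    then have Uones: "mu 2 \<le> count (row_mset mu U 1) 1" using assms(6) by simp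
    have noU: "1 \<notin># row_mset mu U i" if i: "2 \<le> i" "i \<le> n" for i
    proof
      assume "1 \<in># row_mset mu U i"
      then obtain j where j: "j \<in> {1..mu i}" "U i j = 1" unfolding row_mset_def
        by (auto simp: atLeastLessThanSuc_atLeastAtMost)
      have "in_diag n mu i j" using j i unfolding in_diag_def by auto
      then have "i \<le> U i j" using assms(9) unfolding setA_def by auto
      then show False using j i by simp
    qed
    have bad: "\<forall>T\<in>{T\<in>Std n mu. count (row_mset mu T 1) 1 < mu 2}. c T = 0"
      by (rule bad_zero[OF n1 nu1 Uones noU hyp])
    show ?thesis
    proof (cases "tableau n (shape_plus m mu) F \<and> col_strict n (shape_plus m mu) F")
      case False
      then show ?thesis unfolding weyl_vec_WS by (simp only: if_False mult_zero_right sum.neutral_const)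
    next
      case True
      interpret B: bset n r m mu F
        by unfold_locales (use part n1 True in auto)
      show ?thesis
      proof (cases "m \<le> count (mset B.L) 1")
        case True
        interpret B2: bset2 n r m mu F
          by unfold_locales (metis True count_le_replicate_mset_subset_eq)
        have "(weyl_vec n (shape_plus m mu) (tplus m U) F :: 'a) = weyl_vec n mu U B2.F0"
          by (rule B2.main_eq)
        also have "\<dots> = (\<Sum>T\<in>Std n mu. c T * weyl_vec n mu T B2.F0)" using hyp by metis
        also have "\<dots> = (\<Sum>T\<in>Std n mu. c T * weyl_vec n (shape_plus m mu) (tplus m T) F)"
          using B2.main_eq[where 'a='a] by (intro sum.cong) auto
        finally show ?thesis .
      next
        case False
        then have lt: "count (mset B.L) 1 < m" by simp
        have "(weyl_vec n (shape_plus m mu) (tplus m U) F :: 'a) = 0"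
          unfolding weyl_vec_WS using B.zero_case[OF lt Uones] by simp
        moreover have tz: "c T * (weyl_vec n (shape_plus m mu) (tplus m T) F :: 'a) = 0" if T: "T \<in> Std n mu" for T
        proof (cases "count (row_mset mu T 1) 1 < mu 2")
          case True then show ?thesis using bad T by auto
        next
          case False
          then show ?thesis unfolding weyl_vec_WS using B.zero_case[OF lt, of T] by simp
        qed
        have "(\<Sum>T\<in>Std n mu. c T * (weyl_vec n (shape_plus m mu) (tplus m T) F :: 'a)) = 0"
          by (rule sum.neutral) (use tz in blast)
        ultimately show ?thesis by simp
      qed
    qed
  qed
  then show "(weyl_vec n (shape_plus (k * p ^ d) mu) (tplus (k * p ^ d) U) F :: 'a)
       = (\<Sum>T\<in>Std n mu. c T * weyl_vec n (shape_plus (k * p ^ d) mu) (tplus (k * p ^ d) T) F)"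
    unfolding m_def .
qed


end
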